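(* Let $T$ be a line trigraph that contains no odd prism, and let $H$ be a bipartite graph such that $L(H)$ is the full realization of $T$. Then $H$ has no (not necessarily induced) subgraph isomorphic to an even theta, and $H$ is series-parallel, i.e. $H$ has no $K_4$-minor.
   Context: A trigraph $T$ consists of a finite set $V(T)$ and a map $\theta:\binom{V(T)}{2}\to\{-1,0,1\}$; distinct $u,v$ are strongly adjacent if $\theta(uv)=1$, strongly antiadjacent if $\theta(uv)=-1$, semiadjacent if $\theta(uv)=0$, adjacent if $\theta(uv)\in\{0,1\}$, antiadjacent if $\theta(uv)\in\{0,-1\}$. The full realization of $T$ is the graph on $V(T)$ whose edges are the adjacent pairs. A clique (strong clique) is a set of pairwise adjacent (strongly adjacent) vertices. $T$ is a line trigraph if its full realization is the line graph of a bipartite graph and every clique of size at least $3$ in $T$ is a strong clique. A prism in $T$ is an induced subtrigraph whose full realization consists of two vertex-disjoint triangles $\{a_1,a_2,a_3\}$, $\{b_1,b_2,b_3\}$ and three vertex-disjoint induced paths $P_i$ from $a_i$ to $b_i$ ($i=1,2,3$) with no other edges; it is odd if all three $P_i$ have an odd number of edges. An even theta is a graph consisting of three internally vertex-disjoint paths with the same two endpoints, each having an even number of edges. *)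

theory Defs
  imports Main
begin

definition trigraph :: "'a set \<Rightarrow> ('a \<Rightarrow> 'a \<Rightarrow> int) \<Rightarrow> bool" where
  "trigraph V \<theta> \<longleftrightarrow> finite V \<and>
     (\<forall>u\<in>V. \<forall>v\<in>V. u \<noteq> v \<longrightarrow> \<theta> u v = \<theta> v u \<and> \<theta> u v \<in> {-1, 0, 1})"

definition tadj :: "('a \<Rightarrow> 'a \<Rightarrow> int) \<Rightarrow> 'a \<Rightarrow> 'a \<Rightarrow> bool" where
  "tadj \<theta> u v \<longleftrightarrow> u \<noteq> v \<and> \<theta> u v \<in> {0, 1}"

definition tstrong :: "('a \<Rightarrow> 'a \<Rightarrow> int) \<Rightarrow> 'a \<Rightarrow> 'a \<Rightarrow> bool" where
  "tstrong \<theta> u v \<longleftrightarrow> u \<noteq> v \<and> \<theta> u v = 1"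

definition tclique :: "'a set \<Rightarrow> ('a \<Rightarrow> 'a \<Rightarrow> int) \<Rightarrow> 'a set \<Rightarrow> bool" where
  "tclique V \<theta> K \<longleftrightarrow> K \<subseteq> V \<and> (\<forall>u\<in>K. \<forall>v\<in>K. u \<noteq> v \<longrightarrow> tadj \<theta> u v)"

definition tstrong_clique :: "'a set \<Rightarrow> ('a \<Rightarrow> 'a \<Rightarrow> int) \<Rightarrow> 'a set \<Rightarrow> bool" where
  "tstrong_clique V \<theta> K \<longleftrightarrow> K \<subseteq> V \<and> (\<forall>u\<in>K. \<forall>v\<in>K. u \<noteq> v \<longrightarrow> tstrong \<theta> u v)"

definition graph :: "'b set \<Rightarrow> ('b \<Rightarrow> 'b \<Rightarrow> bool) \<Rightarrow> bool" where
  "graph W E \<longleftrightarrow> finite W \<and> (\<forall>u v. E u v \<longrightarrow> u \<in> W \<and> v \<in> W \<and> u \<noteq> v \<and> E v u)"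

definition bipartite :: "'b set \<Rightarrow> ('b \<Rightarrow> 'b \<Rightarrow> bool) \<Rightarrow> bool" where
  "bipartite W E \<longleftrightarrow> (\<exists>A B. A \<union> B = W \<and> A \<inter> B = {} \<and>
     (\<forall>u v. E u v \<longrightarrow> (u \<in> A \<and> v \<in> B) \<or> (u \<in> B \<and> v \<in> A)))"

definition edges :: "('b \<Rightarrow> 'b \<Rightarrow> bool) \<Rightarrow> 'b set set" where
  "edges E = {{u, v} | u v. E u v}"

definition is_line_graph_of ::
  "'a set \<Rightarrow> ('a \<Rightarrow> 'a \<Rightarrow> bool) \<Rightarrow> 'b set \<Rightarrow> ('b \<Rightarrow> 'b \<Rightarrow> bool) \<Rightarrow> bool" where
  "is_line_graph_of V adj W E \<longleftrightarrow> (\<exists>f. bij_betw f V (edges E) \<and>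
     (\<forall>x\<in>V. \<forall>y\<in>V. adj x y \<longleftrightarrow> x \<noteq> y \<and> f x \<inter> f y \<noteq> {}))"

text \<open>Line trigraph. The bipartite graph in the definition is taken on vertex type nat;
  since all graphs here are finite, this is no restriction (up to isomorphism).\<close>

definition line_trigraph :: "'a set \<Rightarrow> ('a \<Rightarrow> 'a \<Rightarrow> int) \<Rightarrow> bool" where
  "line_trigraph V \<theta> \<longleftrightarrow> trigraph V \<theta> \<and>
     (\<exists>(W :: nat set) E. graph W E \<and> bipartite W E \<and> is_line_graph_of V (tadj \<theta>) W E) \<and>
     (\<forall>K. tclique V \<theta> K \<and> card K \<ge> 3 \<longrightarrow> tstrong_clique V \<theta> K)"

text \<open>A path (as a vertex list) in a graph with adjacency E; its number of edges is length - 1.\<close>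

definition gpath :: "('b \<Rightarrow> 'b \<Rightarrow> bool) \<Rightarrow> 'b list \<Rightarrow> bool" where
  "gpath E ps \<longleftrightarrow> ps \<noteq> [] \<and> distinct ps \<and>
     (\<forall>i. Suc i < length ps \<longrightarrow> E (ps ! i) (ps ! Suc i))"

definition induced_path :: "('b \<Rightarrow> 'b \<Rightarrow> bool) \<Rightarrow> 'b list \<Rightarrow> bool" where
  "induced_path E ps \<longleftrightarrow> gpath E ps \<and>
     (\<forall>i j. j < length ps \<longrightarrow> Suc i < j \<longrightarrow> \<not> E (ps ! i) (ps ! j) \<and> \<not> E (ps ! j) (ps ! i))"

definition consec :: "'b list \<Rightarrow> 'b \<Rightarrow> 'b \<Rightarrow> bool" where
  "consec ps u v \<longleftrightarrow> (\<exists>k. Suc k < length ps \<and> {u, v} = {ps ! k, ps ! Suc k})"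

text \<open>X induces an odd prism in the graph (V, adj): triangles {a1,a2,a3}, {b1,b2,b3}
  (a_i = first, b_i = last vertex of P_i), vertex-disjoint induced paths P_i, no other edges,
  and every P_i has an odd number of edges.\<close>

definition odd_prism_in :: "'a set \<Rightarrow> ('a \<Rightarrow> 'a \<Rightarrow> bool) \<Rightarrow> 'a set \<Rightarrow> bool" where
  "odd_prism_in V adj X \<longleftrightarrow> X \<subseteq> V \<and> (\<exists>P1 P2 P3.
     X = set P1 \<union> set P2 \<union> set P3 \<and>
     induced_path adj P1 \<and> induced_path adj P2 \<and> induced_path adj P3 \<and>
     set P1 \<inter> set P2 = {} \<and> set P1 \<inter> set P3 = {} \<and> set P2 \<inter> set P3 = {} \<and>
     hd P1 \<noteq> last P1 \<and> hd P2 \<noteq> last P2 \<and> hd P3 \<noteq> last P3 \<and>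
     odd (length P1 - 1) \<and> odd (length P2 - 1) \<and> odd (length P3 - 1) \<and>
     (\<forall>u\<in>X. \<forall>v\<in>X. adj u v \<longleftrightarrow>
        consec P1 u v \<or> consec P2 u v \<or> consec P3 u v \<or>
        (u \<noteq> v \<and> u \<in> {hd P1, hd P2, hd P3} \<and> v \<in> {hd P1, hd P2, hd P3}) \<or>
        (u \<noteq> v \<and> u \<in> {last P1, last P2, last P3} \<and> v \<in> {last P1, last P2, last P3})))"

definition has_even_theta :: "'b set \<Rightarrow> ('b \<Rightarrow> 'b \<Rightarrow> bool) \<Rightarrow> bool" where
  "has_even_theta W E \<longleftrightarrow> (\<exists>x y P1 P2 P3. x \<noteq> y \<and>
     gpath E P1 \<and> gpath E P2 \<and> gpath E P3 \<and>
     set P1 \<subseteq> W \<and> set P2 \<subseteq> W \<and> set P3 \<subseteq> W \<and>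
     hd P1 = x \<and> last P1 = y \<and> hd P2 = x \<and> last P2 = y \<and> hd P3 = x \<and> last P3 = y \<and>
     set P1 \<inter> set P2 = {x, y} \<and> set P1 \<inter> set P3 = {x, y} \<and> set P2 \<inter> set P3 = {x, y} \<and>
     even (length P1 - 1) \<and> even (length P2 - 1) \<and> even (length P3 - 1))"

definition connected_on :: "('b \<Rightarrow> 'b \<Rightarrow> bool) \<Rightarrow> 'b set \<Rightarrow> bool" where
  "connected_on E S \<longleftrightarrow>
     (\<forall>u\<in>S. \<forall>v\<in>S. (\<lambda>x y. x \<in> S \<and> y \<in> S \<and> E x y)\<^sup>*\<^sup>* u v)"

definition has_K4_minor :: "'b set \<Rightarrow> ('b \<Rightarrow> 'b \<Rightarrow> bool) \<Rightarrow> bool" where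
  "has_K4_minor W E \<longleftrightarrow> (\<exists>B :: nat \<Rightarrow> 'b set.
     (\<forall>i<4. B i \<noteq> {} \<and> B i \<subseteq> W \<and> connected_on E (B i)) \<and>
     (\<forall>i<4. \<forall>j<4. i \<noteq> j \<longrightarrow> B i \<inter> B j = {} \<and> (\<exists>u\<in>B i. \<exists>v\<in>B j. E u v)))"

definition series_parallel :: "'b set \<Rightarrow> ('b \<Rightarrow> 'b \<Rightarrow> bool) \<Rightarrow> bool" where
  "series_parallel W E \<longleftrightarrow> \<not> has_K4_minor W E"

end

theory Submission
  imports Defs
begin

fun walk :: "('b \<Rightarrow> 'b \<Rightarrow> bool) \<Rightarrow> 'b list \<Rightarrow> bool" where
  "walk E [] = True" | "walk E [x] = True" | "walk E (x#y#xs) = (E x y \<and> walk E (y#xs))"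

lemma walk_nth: "walk E ps \<longleftrightarrow> (\<forall>i. Suc i < length ps \<longrightarrow> E (ps!i) (ps!Suc i))"
proof (induction E ps rule: walk.induct)
  case (3 E x y xs)
  show ?case
  proof
    assume "walk E (x#y#xs)"
    thus "\<forall>i. Suc i < length (x#y#xs) \<longrightarrow> E ((x#y#xs)!i) ((x#y#xs)!Suc i)"
      using 3 by (auto simp: nth_Cons split: nat.splits)
  next
    assume h: "\<forall>i. Suc i < length (x#y#xs) \<longrightarrow> E ((x#y#xs)!i) ((x#y#xs)!Suc i)"
    have "E x y" using h[rule_format, of 0] by simp
    moreover have "walk E (y#xs)" unfolding 3
    proof (intro allI impI)
      fix i assume "Suc i < length (y#xs)"
      thus "E ((y#xs)!i) ((y#xs)!Suc i)" using h[rule_format, of "Suc i"] by simp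
    qed
    ultimately show "walk E (x#y#xs)" by simp
  qed
qed auto

lemma gpath_walk: "gpath E ps \<longleftrightarrow> ps \<noteq> [] \<and> distinct ps \<and> walk E ps"
  unfolding gpath_def walk_nth by auto

lemma walk_Cons: "walk E (x#ys) \<longleftrightarrow> walk E ys \<and> (ys \<noteq> [] \<longrightarrow> E x (hd ys))"
  by (cases ys) auto

lemma walk_append: "walk E (xs@ys) \<longleftrightarrow> walk E xs \<and> walk E ys \<and> (xs \<noteq> [] \<and> ys \<noteq> [] \<longrightarrow> E (last xs) (hd ys))"
proof (induction xs)
  case (Cons x xs) thus ?case by (cases xs) (auto simp: walk_Cons)
qed auto

lemma walk_rev: assumes "\<forall>u v. E u v \<longrightarrow> E v u" shows "walk E xs \<Longrightarrow> walk E (rev xs)"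
proof (induction xs)
  case (Cons x xs)
  thus ?case using assms by (auto simp: walk_append walk_Cons last_rev)
qed auto

lemma walk_take: "walk E xs \<Longrightarrow> walk E (take n xs)"
  using walk_append[of E "take n xs" "drop n xs"] by simp
lemma walk_drop: "walk E xs \<Longrightarrow> walk E (drop n xs)"
  using walk_append[of E "take n xs" "drop n xs"] by simp

lemma gpath_rev: "\<forall>u v. E u v \<longrightarrow> E v u \<Longrightarrow> gpath E xs \<Longrightarrow> gpath E (rev xs)"
  using walk_rev by (auto simp: gpath_walk)

lemma gpath_prefix:
  assumes "gpath E ps" "i < length ps"
  shows "gpath E (take (Suc i) ps) \<and> hd (take (Suc i) ps) = hd ps \<and> last (take (Suc i) ps) = ps!i
     \<and> set (take (Suc i) ps) \<subseteq> set ps"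
proof -
  have "gpath E (take (Suc i) ps)" using assms by (auto simp: gpath_walk walk_take)
  moreover have "last (take (Suc i) ps) = ps!i" using assms by (simp add: take_Suc_conv_app_nth)
  moreover have "hd (take (Suc i) ps) = hd ps" by simp
  ultimately show ?thesis by (auto dest: in_set_takeD)
qed

lemma gpath_suffix:
  assumes "gpath E ps" "i < length ps"
  shows "gpath E (drop i ps) \<and> hd (drop i ps) = ps!i \<and> last (drop i ps) = last ps
     \<and> set (drop i ps) \<subseteq> set ps"
  using assms by (auto simp: gpath_walk walk_drop hd_drop_conv_nth dest: in_set_dropD)

lemma gpath_join:
  assumes "gpath E xs" "gpath E ys" "last xs = hd ys" "set xs \<inter> set ys \<subseteq> {hd ys}"
  shows "gpath E (xs @ tl ys) \<and> hd (xs @ tl ys) = hd xs \<and> last (xs @ tl ys) = last ys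
     \<and> set (xs @ tl ys) = set xs \<union> set ys"
proof -
  obtain z zs where ys: "ys = z # zs" using assms(2) by (cases ys) (auto simp: gpath_walk)
  have "walk E ys" using assms(2) by (simp add: gpath_walk)
  hence w: "walk E zs" "zs \<noteq> [] \<Longrightarrow> E z (hd zs)" using ys walk_append[of E "[z]" zs] by auto
  have xs: "xs \<noteq> []" "distinct xs" "walk E xs" using assms(1) by (auto simp: gpath_walk)
  have d: "distinct zs" "z \<notin> set zs" using assms(2) ys by (auto simp: gpath_walk)
  have "set xs \<inter> set zs = {}" using assms(4) ys d by auto
  hence "gpath E (xs @ zs)" using xs d w assms(3) ys by (auto simp: gpath_walk walk_append)
  moreover have "set (xs @ zs) = set xs \<union> set ys" proof -
    have "last xs \<in> set xs" using xs(1) by simp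
    thus ?thesis using ys assms(3) by auto
  qed
  moreover have "last (xs @ zs) = last ys" using ys assms(3) by auto
  ultimately show ?thesis using ys xs by auto
qed

lemma gpath_edge_join:
  assumes "gpath E xs" "gpath E ys" "E (last xs) (hd ys)" "set xs \<inter> set ys = {}"
  shows "gpath E (xs @ ys) \<and> hd (xs @ ys) = hd xs \<and> last (xs @ ys) = last ys"
  using assms by (auto simp: gpath_walk walk_append)


lemma conn_path:
  assumes "(\<lambda>x y. x \<in> S \<and> y \<in> S \<and> E x y)\<^sup>*\<^sup>* u v" "u \<in> S"
  shows "\<exists>ps. gpath E ps \<and> hd ps = u \<and> last ps = v \<and> set ps \<subseteq> S"
  using assms(1)
proof (induction rule: rtranclp_induct)
  case base
  show ?case using assms(2) by (intro exI[of _ "[u]"]) (auto simp: gpath_walk)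
next
  case (step w v)
  then obtain ps where ps: "gpath E ps" "hd ps = u" "last ps = w" "set ps \<subseteq> S" by blast
  show ?case
  proof (cases "v \<in> set ps")
    case True
    then obtain i where i: "i < length ps" "ps!i = v" by (auto simp: in_set_conv_nth)
    show ?thesis using gpath_prefix[OF ps(1) i(1)] i ps by (intro exI[of _ "take (Suc i) ps"]) auto
  next
    case False
    have "gpath E (ps @ [v])" using ps step(2) False by (auto simp: gpath_walk walk_append)
    thus ?thesis using ps step(2) by (intro exI[of _ "ps @ [v]"]) (auto simp: gpath_walk)
  qed
qed

lemma first_hit:
  assumes "gpath E ps" "set ps \<inter> T \<noteq> {}"
  shows "\<exists>qs. gpath E qs \<and> hd qs = hd ps \<and> last qs \<in> T \<and> set qs \<subseteq> set ps \<and> set qs \<inter> T = {last qs}"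
proof -
  define i where "i = (LEAST i. i < length ps \<and> ps!i \<in> T)"
  have ex: "\<exists>i. i < length ps \<and> ps!i \<in> T" using assms(2) by (auto simp: in_set_conv_nth)
  hence i: "i < length ps" "ps!i \<in> T" unfolding i_def by (metis (mono_tags, lifting) LeastI_ex)+
  have min: "\<And>m. m < i \<Longrightarrow> ps!m \<notin> T"
    using i(1) unfolding i_def by (metis (mono_tags, lifting) not_less_Least order.strict_trans)
  have P: "gpath E (take (Suc i) ps) \<and> hd (take (Suc i) ps) = hd ps \<and> last (take (Suc i) ps) = ps!i
     \<and> set (take (Suc i) ps) \<subseteq> set ps" using gpath_prefix[OF assms(1) i(1)] .
  have "set (take (Suc i) ps) \<inter> T = {ps!i}"
  proof
    show "set (take (Suc i) ps) \<inter> T \<subseteq> {ps!i}"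
    proof
      fix z assume z: "z \<in> set (take (Suc i) ps) \<inter> T"
      then obtain m where m: "m < length (take (Suc i) ps)" "take (Suc i) ps ! m = z" by (auto simp: in_set_conv_nth)
      have "m \<le> i" "ps!m = z" using m i(1) by auto
      moreover have "\<not> m < i" using min z \<open>ps!m = z\<close> by auto
      ultimately show "z \<in> {ps!i}" by auto
    qed
    show "{ps!i} \<subseteq> set (take (Suc i) ps) \<inter> T" using i P by (auto simp: take_Suc_conv_app_nth)
  qed
  thus ?thesis using P i by (intro exI[of _ "take (Suc i) ps"]) auto
qed

lemma take_drop_inter:
  assumes "distinct xs" "i < length xs"
  shows "set (take (Suc i) xs) \<inter> set (drop i xs) = {xs!i}"
proof -
  have "xs = take i xs @ [xs!i] @ drop (Suc i) xs" using assms(2) by (simp add: id_take_nth_drop)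
  hence "distinct (take i xs @ [xs!i] @ drop (Suc i) xs)" using assms(1) by metis
  moreover have "take (Suc i) xs = take i xs @ [xs!i]" using assms(2) by (simp add: take_Suc_conv_app_nth)
  moreover have "drop i xs = xs!i # drop (Suc i) xs" using assms(2) by (simp add: Cons_nth_drop_Suc)
  ultimately show ?thesis by auto
qed

lemma spider:
  assumes sym: "\<forall>u v. E u v \<longrightarrow> E v u"
    and conn: "connected_on E S" and S: "p \<in> S" "q \<in> S" "r \<in> S"
  shows "\<exists>c A B C. c \<in> S \<and> gpath E A \<and> gpath E B \<and> gpath E C \<and> hd A = c \<and> hd B = c \<and> hd C = c
    \<and> last A = p \<and> last B = q \<and> last C = r \<and> set A \<subseteq> S \<and> set B \<subseteq> S \<and> set C \<subseteq> S
    \<and> set A \<inter> set B = {c} \<and> set A \<inter> set C = {c} \<and> set B \<inter> set C = {c}"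
proof -
  obtain P where P: "gpath E P" "hd P = p" "last P = q" "set P \<subseteq> S"
    using conn_path[of S E p q] conn S unfolding connected_on_def by blast
  obtain R0 where R0: "gpath E R0" "hd R0 = r" "last R0 = p" "set R0 \<subseteq> S"
    using conn_path[of S E r p] conn S unfolding connected_on_def by blast
  have "p \<in> set R0 \<inter> set P" using R0 P by (metis IntI gpath_walk hd_in_set last_in_set)
  then obtain R where R: "gpath E R" "hd R = r" "last R \<in> set P" "set R \<subseteq> set R0" "set R \<inter> set P = {last R}"
    using first_hit[OF R0(1), of "set P"] R0 by blast
  define c where "c = last R"
  obtain i where i: "i < length P" "P!i = c" using R(3) c_def by (auto simp: in_set_conv_nth)
  have dP: "distinct P" using P by (simp add: gpath_walk)
  note pre = gpath_prefix[OF P(1) i(1)] and suf = gpath_suffix[OF P(1) i(1)]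
  define A where "A = rev (take (Suc i) P)"
  define B where "B = drop i P"
  define C where "C = rev R"
  have Rne: "R \<noteq> []" using R by (simp add: gpath_walk)
  have tne: "take (Suc i) P \<noteq> []" using pre by (simp add: gpath_walk)
  have AB: "set A \<inter> set B = {c}" using take_drop_inter[OF dP i(1)] i unfolding A_def B_def by simp
  have "set A \<subseteq> set P" "set B \<subseteq> set P" using pre suf unfolding A_def B_def by auto
  moreover have "c \<in> set A" "c \<in> set B" using AB by auto
  moreover have "c \<in> set C" unfolding C_def c_def using Rne by simp
  moreover have "set C \<inter> set P = {c}" using R(5) unfolding C_def c_def by simp
  ultimately have AC: "set A \<inter> set C = {c}" and BC: "set B \<inter> set C = {c}" by blast+
  have "gpath E A" "gpath E B" "gpath E C" using gpath_rev[OF sym] pre suf R(1) unfolding A_def B_def C_def by auto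
  moreover have "hd A = c" "last A = p" using pre i P tne unfolding A_def by (auto simp: hd_rev last_rev)
  moreover have "hd B = c" "last B = q" using suf i P unfolding B_def by auto
  moreover have "hd C = c" "last C = r" using R Rne unfolding C_def c_def by (auto simp: hd_rev last_rev)
  moreover have "set A \<subseteq> S" "set B \<subseteq> S" "set C \<subseteq> S" using pre suf P R R0 unfolding A_def B_def C_def by auto
  moreover have "c \<in> S" using \<open>c \<in> set C\<close> \<open>set C \<subseteq> S\<close> by blast
  ultimately show ?thesis using AB AC BC by blast
qed

lemma parity:
  assumes "walk E ps" "\<forall>u v. E u v \<longrightarrow> col u \<noteq> col v"
  shows "k < length ps \<Longrightarrow> col (ps!k) = (col (ps!0) = even k)"
proof (induction k)
  case (Suc k)
  have "E (ps!k) (ps!Suc k)" using assms(1) Suc.prems by (simp add: walk_nth)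
  thus ?case using Suc assms(2) by auto
qed auto

lemma parity_even:
  fixes col :: "'b \<Rightarrow> bool"
  assumes "gpath E ps" "\<forall>u v. E u v \<longrightarrow> col u \<noteq> col v" "col (hd ps) = col (last ps)"
  shows "even (length ps - 1)"
proof -
  have ne: "ps \<noteq> []" and w: "walk E ps" using assms(1) by (auto simp: gpath_walk)
  have "col (ps!(length ps - 1)) = (col (ps!0) = even (length ps - 1))"
    using parity[OF w assms(2), of "length ps - 1"] ne by simp
  moreover have "ps!(length ps - 1) = last ps" "ps!0 = hd ps" using ne by (auto simp: last_conv_nth hd_conv_nth)
  ultimately show ?thesis using assms(3) by auto
qed


lemma spider3:
  assumes sym: "\<forall>u v. E u v \<longrightarrow> E v u" and conn: "connected_on E S"
    and d: "j1 \<noteq> j2" "j1 \<noteq> j3" "j2 \<noteq> j3" and p: "p j1 \<in> S" "p j2 \<in> S" "p j3 \<in> S"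
  shows "\<exists>c L. c \<in> S \<and> (\<forall>j\<in>{j1,j2,j3}. gpath E (L j) \<and> hd (L j) = c \<and> last (L j) = p j \<and> set (L j) \<subseteq> S)
     \<and> (\<forall>j\<in>{j1,j2,j3}. \<forall>j'\<in>{j1,j2,j3}. j \<noteq> j' \<longrightarrow> set (L j) \<inter> set (L j') = {c})"
proof -
  obtain c A B C where sp: "c \<in> S \<and> gpath E A \<and> gpath E B \<and> gpath E C \<and> hd A = c \<and> hd B = c \<and> hd C = c
    \<and> last A = p j1 \<and> last B = p j2 \<and> last C = p j3 \<and> set A \<subseteq> S \<and> set B \<subseteq> S \<and> set C \<subseteq> S
    \<and> set A \<inter> set B = {c} \<and> set A \<inter> set C = {c} \<and> set B \<inter> set C = {c}"
    using spider[OF sym conn p] by blast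
  define L where "L j = (if j = j1 then A else if j = j2 then B else C)" for j
  show ?thesis using sp d by (intro exI[of _ c] exI[of _ L]) (auto simp: L_def)
qed

lemma others:
  assumes "(i::nat) < 4"
  obtains j1 j2 j3 where "j1 \<noteq> j2" "j1 \<noteq> j3" "j2 \<noteq> j3" "{j. j < 4 \<and> j \<noteq> i} = {j1,j2,j3}"
proof -
  have "i = 0 \<or> i = 1 \<or> i = 2 \<or> i = 3" using assms by arith
  moreover have "{j::nat. j < 4 \<and> j \<noteq> 0} = {1,2,3}" by auto
  moreover have "{j::nat. j < 4 \<and> j \<noteq> 1} = {0,2,3}" by auto
  moreover have "{j::nat. j < 4 \<and> j \<noteq> 2} = {0,1,3}" by auto
  moreover have "{j::nat. j < 4 \<and> j \<noteq> 3} = {0,1,2}" by auto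
  ultimately show ?thesis
    apply (elim disjE)
    subgoal by (rule that[of 1 2 3]) simp_all
    subgoal by (rule that[of 0 2 3]) simp_all
    subgoal by (rule that[of 0 1 3]) simp_all
    subgoal by (rule that[of 0 1 2]) simp_all
    done
qed

lemma K4_even_theta:
  fixes W :: "'b set" and E :: "'b \<Rightarrow> 'b \<Rightarrow> bool"
  assumes g: "graph W E" and bip: "bipartite W E" and K: "has_K4_minor W E"
  shows "has_even_theta W E"
proof -
  have sym: "\<forall>u v. E u v \<longrightarrow> E v u" using g unfolding graph_def by blast
  obtain A0 B0 where AB: "A0 \<union> B0 = W" "A0 \<inter> B0 = {}" "\<forall>u v. E u v \<longrightarrow> (u\<in>A0 \<and> v\<in>B0) \<or> (u\<in>B0 \<and> v\<in>A0)"
    using bip unfolding bipartite_def by blast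
  define col where "col = (\<lambda>z. z \<in> A0)"
  have colE: "\<forall>u v. E u v \<longrightarrow> col u \<noteq> col v" using AB unfolding col_def by blast
  from K[unfolded has_K4_minor_def] obtain B :: "nat \<Rightarrow> 'b set" where B0: "(\<forall>i<4. B i \<noteq> {} \<and> B i \<subseteq> W \<and> connected_on E (B i)) \<and>
     (\<forall>i<4. \<forall>j<4. i \<noteq> j \<longrightarrow> B i \<inter> B j = {} \<and> (\<exists>u\<in>B i. \<exists>v\<in>B j. E u v))" ..
  note B = conjunct1[OF B0] conjunct2[OF B0]
  have "\<forall>ij. \<exists>x. fst ij < snd ij \<and> snd ij < 4 \<longrightarrow> fst x \<in> B (fst ij) \<and> snd x \<in> B (snd ij) \<and> E (fst x) (snd x)"
  proof (intro allI)
    fix ij :: "nat \<times> nat"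
    obtain i j where ij: "ij = (i,j)" by fastforce
    show "\<exists>x. fst ij < snd ij \<and> snd ij < 4 \<longrightarrow> fst x \<in> B (fst ij) \<and> snd x \<in> B (snd ij) \<and> E (fst x) (snd x)"
    proof (cases "i < j \<and> j < 4")
      case True
      hence "i < 4" "i \<noteq> j" by auto
      then obtain u v where "u \<in> B i" "v \<in> B j" "E u v" using B(2)[rule_format, of i j] True by blast
      thus ?thesis using ij by (intro exI[of _ "(u,v)"]) auto
    next
      case False
      thus ?thesis using ij by (intro exI[of _ undefined]) auto
    qed
  qed
  from choice[OF this] obtain gg0 where gp0: "\<forall>ij. fst ij < snd ij \<and> snd ij < 4 \<longrightarrow> fst (gg0 ij) \<in> B (fst ij) \<and> snd (gg0 ij) \<in> B (snd ij) \<and> E (fst (gg0 ij)) (snd (gg0 ij))" ..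
  define gg where "gg i j = gg0 (i,j)" for i j
  have gp: "\<forall>i j. i < j \<and> j < 4 \<longrightarrow> fst (gg i j) \<in> B i \<and> snd (gg i j) \<in> B j \<and> E (fst (gg i j)) (snd (gg i j))"
  proof (intro allI impI)
    fix i j :: nat assume "i < j \<and> j < 4"
    thus "fst (gg i j) \<in> B i \<and> snd (gg i j) \<in> B j \<and> E (fst (gg i j)) (snd (gg i j))"
      using gp0[rule_format, of "(i,j)"] unfolding gg_def by simp
  qed
  define pt where "pt i j = (if i < j then fst (gg i j) else snd (gg j i))" for i j
  have pt: "pt i j \<in> B i \<and> E (pt i j) (pt j i)" if "i<4" "j<4" "i\<noteq>j" for i j
  proof (cases "i < j")
    case True thus ?thesis using gp that by (auto simp: pt_def)
  next
    case False
    hence "j < i" using that by arith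
    thus ?thesis using gp that sym by (auto simp: pt_def)
  qed
  have "\<forall>i. \<exists>cL. i < 4 \<longrightarrow> (fst cL \<in> B i \<and> (\<forall>j<4. j \<noteq> i \<longrightarrow> gpath E (snd cL j) \<and> hd (snd cL j) = fst cL
     \<and> last (snd cL j) = pt i j \<and> set (snd cL j) \<subseteq> B i)
     \<and> (\<forall>j<4. \<forall>j'<4. j \<noteq> i \<longrightarrow> j' \<noteq> i \<longrightarrow> j \<noteq> j' \<longrightarrow> set (snd cL j) \<inter> set (snd cL j') = {fst cL}))"
  proof (intro allI)
    fix i :: nat
    show "\<exists>cL. i < 4 \<longrightarrow> (fst cL \<in> B i \<and> (\<forall>j<4. j \<noteq> i \<longrightarrow> gpath E (snd cL j) \<and> hd (snd cL j) = fst cL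
     \<and> last (snd cL j) = pt i j \<and> set (snd cL j) \<subseteq> B i)
     \<and> (\<forall>j<4. \<forall>j'<4. j \<noteq> i \<longrightarrow> j' \<noteq> i \<longrightarrow> j \<noteq> j' \<longrightarrow> set (snd cL j) \<inter> set (snd cL j') = {fst cL}))"
    proof (cases "i < 4")
      case True
      obtain j1 j2 j3 where J: "j1 \<noteq> j2" "j1 \<noteq> j3" "j2 \<noteq> j3" "{j. j < 4 \<and> j \<noteq> i} = {j1,j2,j3}"
        by (rule others[OF True])
      have Jm: "j < 4 \<and> j \<noteq> i \<longleftrightarrow> j \<in> {j1,j2,j3}" for j
      proof -
        have "(j \<in> {j. j < 4 \<and> j \<noteq> i}) = (j \<in> {j1,j2,j3})" by (simp only: J(4))
        thus ?thesis by simp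
      qed
      have ptin: "pt i j \<in> B i" if "j \<in> {j1,j2,j3}" for j
      proof -
        have "j < 4" "j \<noteq> i" using Jm[of j] that by auto
        thus ?thesis using pt[of i j] True by simp
      qed
      have cn: "connected_on E (B i)" using B(1)[rule_format, OF True] by simp
      obtain c L where cL: "c \<in> B i" "\<forall>j\<in>{j1,j2,j3}. gpath E (L j) \<and> hd (L j) = c \<and> last (L j) = pt i j \<and> set (L j) \<subseteq> B i"
        "\<forall>j\<in>{j1,j2,j3}. \<forall>j'\<in>{j1,j2,j3}. j \<noteq> j' \<longrightarrow> set (L j) \<inter> set (L j') = {c}"
        using spider3[OF sym cn J(1-3), of "pt i"] ptin[of j1] ptin[of j2] ptin[of j3] by auto
      have X1: "\<forall>j<4. j \<noteq> i \<longrightarrow> gpath E (L j) \<and> hd (L j) = c \<and> last (L j) = pt i j \<and> set (L j) \<subseteq> B i"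
      proof (intro allI impI)
        fix j assume "j < 4" "j \<noteq> i"
        hence "j \<in> {j1,j2,j3}" using Jm[of j] by simp
        thus "gpath E (L j) \<and> hd (L j) = c \<and> last (L j) = pt i j \<and> set (L j) \<subseteq> B i" using cL(2) by blast
      qed
      have X2: "\<forall>j<4. \<forall>j'<4. j \<noteq> i \<longrightarrow> j' \<noteq> i \<longrightarrow> j \<noteq> j' \<longrightarrow> set (L j) \<inter> set (L j') = {c}"
      proof (intro allI impI)
        fix j j' assume "j < 4" "j' < 4" "j \<noteq> i" "j' \<noteq> i" "j \<noteq> j'"
        hence "j \<in> {j1,j2,j3}" "j' \<in> {j1,j2,j3}" using Jm[of j] Jm[of j'] by simp_all
        thus "set (L j) \<inter> set (L j') = {c}" using cL(3) \<open>j \<noteq> j'\<close> by blast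
      qed
      show ?thesis using cL(1) X1 X2 by (intro exI[of _ "(c, L)"]) simp
    next
      case False thus ?thesis by simp
    qed
  qed
  from choice[OF this] obtain h where h: "\<forall>i. i < 4 \<longrightarrow> (fst (h i) \<in> B i \<and> (\<forall>j<4. j \<noteq> i \<longrightarrow> gpath E (snd (h i) j) \<and> hd (snd (h i) j) = fst (h i)
     \<and> last (snd (h i) j) = pt i j \<and> set (snd (h i) j) \<subseteq> B i)
     \<and> (\<forall>j<4. \<forall>j'<4. j \<noteq> i \<longrightarrow> j' \<noteq> i \<longrightarrow> j \<noteq> j' \<longrightarrow> set (snd (h i) j) \<inter> set (snd (h i) j') = {fst (h i)}))" ..
  define c where "c i = fst (h i)" for i
  define Leg where "Leg i j = snd (h i) j" for i j
  have cB: "c i \<in> B i" if "i < 4" for i using h that unfolding c_def by blast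
  have Leg: "gpath E (Leg i j) \<and> hd (Leg i j) = c i \<and> last (Leg i j) = pt i j \<and> set (Leg i j) \<subseteq> B i"
    if "i < 4" "j < 4" "i \<noteq> j" for i j using h[rule_format, OF that(1)] that unfolding c_def Leg_def by blast
  have LegI: "set (Leg i j) \<inter> set (Leg i j') = {c i}" if "i < 4" "j < 4" "j' < 4" "i \<noteq> j" "i \<noteq> j'" "j \<noteq> j'" for i j j'
    using h[rule_format, OF that(1)] that unfolding c_def Leg_def by blast
  have Bd: "B i \<inter> B j = {}" if "i<4" "j<4" "i\<noteq>j" for i j using B(2) that by blast
  have Wsub: "B i \<subseteq> W" if "i<4" for i using B(1) that by blast
  define Q where "Q i j = Leg i j @ rev (Leg j i)" for i j
  have Qp: "gpath E (Q i j) \<and> hd (Q i j) = c i \<and> last (Q i j) = c j \<and> set (Q i j) = set (Leg i j) \<union> set (Leg j i)"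
    if "i<4" "j<4" "i\<noteq>j" for i j
  proof -
    note L1 = Leg[OF that] and L2 = Leg[OF that(2,1) that(3)[symmetric]]
    have ne: "Leg j i \<noteq> []" using L2 by (simp add: gpath_walk)
    have "gpath E (Leg i j @ rev (Leg j i)) \<and> hd (Leg i j @ rev (Leg j i)) = hd (Leg i j) \<and> last (Leg i j @ rev (Leg j i)) = last (rev (Leg j i))"
    proof (rule gpath_edge_join)
      show "gpath E (Leg i j)" using L1 by simp
      show "gpath E (rev (Leg j i))" using L2 gpath_rev[OF sym] by blast
      show "E (last (Leg i j)) (hd (rev (Leg j i)))" using L1 L2 pt[OF that] ne by (simp add: hd_rev)
      show "set (Leg i j) \<inter> set (rev (Leg j i)) = {}" using L1 L2 Bd[OF that] by auto
    qed
    thus ?thesis using L1 L2 ne unfolding Q_def by (auto simp: last_rev)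
  qed
  have LegX: "a = a' \<and> (b = b' \<or> z = c a)" if "a<4" "b<4" "a'<4" "b'<4" "a\<noteq>b" "a'\<noteq>b'"
     "z \<in> set (Leg a b)" "z \<in> set (Leg a' b')" for a b a' b' z
  proof -
    have "z \<in> B a" "z \<in> B a'" using Leg[of a b] Leg[of a' b'] that by auto
    hence aa: "a = a'" using Bd[of a a'] that by blast
    moreover have "b = b' \<or> z = c a" using LegI[of a b b'] that aa by auto
    ultimately show ?thesis by blast
  qed
  have Qint: "set (Q i j) \<inter> set (Q k l) \<subseteq> c ` ({i,j} \<inter> {k,l})"
    if "i<4" "j<4" "k<4" "l<4" "i\<noteq>j" "k\<noteq>l" "{i,j} \<noteq> {k,l}" for i j k l
  proof
    fix z assume z: "z \<in> set (Q i j) \<inter> set (Q k l)"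
    hence z1: "z \<in> set (Leg i j) \<or> z \<in> set (Leg j i)" and z2: "z \<in> set (Leg k l) \<or> z \<in> set (Leg l k)"
      using Qp[of i j] Qp[of k l] that by auto
    have key: "z \<in> c ` ({i,j} \<inter> {k,l})" if ab: "{a,b} = {i,j}" "{a',b'} = {k,l}" "a<4" "b<4" "a'<4" "b'<4" "a\<noteq>b" "a'\<noteq>b'"
      "z \<in> set (Leg a b)" "z \<in> set (Leg a' b')" for a b a' b'
    proof -
      have X: "a = a' \<and> (b = b' \<or> z = c a)" using LegX[OF ab(3-10)] .
      have "b \<noteq> b'"
      proof
        assume "b = b'"
        hence "{a,b} = {a',b'}" using X by simp
        thus False using ab(1,2) \<open>{i,j} \<noteq> {k,l}\<close> by simp
      qed
      with X have "z = c a" "a = a'" by auto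
      moreover have "a \<in> {i,j} \<inter> {k,l}" using ab(1,2) \<open>a = a'\<close> by blast
      ultimately show ?thesis by blast
    qed
    show "z \<in> c ` ({i,j} \<inter> {k,l})"
      using z1 z2
      apply (elim disjE)
      subgoal using key[of i j k l] that by (simp add: insert_commute)
      subgoal using key[of i j l k] that by (simp add: insert_commute)
      subgoal using key[of j i k l] that by (simp add: insert_commute)
      subgoal using key[of j i l k] that by (simp add: insert_commute)
      done
  qed
  have cd: "c i \<noteq> c j" if "i<4" "j<4" "i\<noteq>j" for i j
  proof
    assume "c i = c j"
    hence "c i \<in> B i \<inter> B j" using cB[OF that(1)] cB[OF that(2)] by simp
    thus False using Bd[OF that] by simp
  qed
  have QW: "set (Q i j) \<subseteq> W" if "i<4" "j<4" "i\<noteq>j" for i j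
  proof -
    have "set (Leg i j) \<subseteq> B i" "set (Leg j i) \<subseteq> B j" using Leg[OF that] Leg[of j i] that by auto
    thus ?thesis using Qp[OF that] Wsub[OF that(1)] Wsub[OF that(2)] by auto
  qed
  have theta: "has_even_theta W E"
    if d: "i<4" "j<4" "k<4" "l<4" "i\<noteq>j" "i\<noteq>k" "i\<noteq>l" "j\<noteq>k" "j\<noteq>l" "k\<noteq>l" and cc: "col (c i) = col (c j)"
    for i j k l
  proof -
    have I1: "set (Q i k) \<inter> set (Q k j) \<subseteq> {hd (Q k j)}"
      using Qint[of i k k j] Qp[of k j] d by auto
    have I2: "set (Q i l) \<inter> set (Q l j) \<subseteq> {hd (Q l j)}"
      using Qint[of i l l j] Qp[of l j] d by auto
    note Qij = Qp[OF d(1) d(2) d(5)] and Qik = Qp[OF d(1) d(3) d(6)] and Qil = Qp[OF d(1) d(4) d(7)]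
      and Qkj = Qp[OF d(3) d(2) d(8)[THEN not_sym]] and Qlj = Qp[OF d(4) d(2) d(9)[THEN not_sym]]
    have J2: "gpath E (Q i k @ tl (Q k j)) \<and> hd (Q i k @ tl (Q k j)) = hd (Q i k) \<and> last (Q i k @ tl (Q k j)) = last (Q k j)
     \<and> set (Q i k @ tl (Q k j)) = set (Q i k) \<union> set (Q k j)"
      by (rule gpath_join) (use Qik Qkj I1 in auto)
    have J3: "gpath E (Q i l @ tl (Q l j)) \<and> hd (Q i l @ tl (Q l j)) = hd (Q i l) \<and> last (Q i l @ tl (Q l j)) = last (Q l j)
     \<and> set (Q i l @ tl (Q l j)) = set (Q i l) \<union> set (Q l j)"
      by (rule gpath_join) (use Qil Qlj I2 in auto)
    define P1 where "P1 = Q i j"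
    define P2 where "P2 = Q i k @ tl (Q k j)"
    define P3 where "P3 = Q i l @ tl (Q l j)"
    have p1: "gpath E P1" "hd P1 = c i" "last P1 = c j" "set P1 = set (Q i j)" using Qij unfolding P1_def by auto
    have p2: "gpath E P2" "hd P2 = c i" "last P2 = c j" "set P2 = set (Q i k) \<union> set (Q k j)"
      using J2 Qik Qkj unfolding P2_def by auto
    have p3: "gpath E P3" "hd P3 = c i" "last P3 = c j" "set P3 = set (Q i l) \<union> set (Q l j)"
      using J3 Qil Qlj unfolding P3_def by auto
    have Qin: "c a \<in> set (Q a b) \<and> c b \<in> set (Q a b)" if "a<4" "b<4" "a\<noteq>b" for a b
    proof -
      have "Q a b \<noteq> []" using Qp[OF that] by (simp add: gpath_walk)
      thus ?thesis using Qp[OF that] by (metis hd_in_set last_in_set)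
    qed
    have q1: "set (Q i j) \<inter> set (Q i k) \<subseteq> {c i}" using Qint[of i j i k] d by (auto simp: doubleton_eq_iff)
    have q2: "set (Q i j) \<inter> set (Q k j) \<subseteq> {c j}" using Qint[of i j k j] d by (auto simp: doubleton_eq_iff)
    have q3: "set (Q i j) \<inter> set (Q i l) \<subseteq> {c i}" using Qint[of i j i l] d by (auto simp: doubleton_eq_iff)
    have q4: "set (Q i j) \<inter> set (Q l j) \<subseteq> {c j}" using Qint[of i j l j] d by (auto simp: doubleton_eq_iff)
    have q5: "set (Q i k) \<inter> set (Q i l) \<subseteq> {c i}" using Qint[of i k i l] d by (auto simp: doubleton_eq_iff)
    have q6: "set (Q i k) \<inter> set (Q l j) \<subseteq> {}" using Qint[of i k l j] d by (auto simp: doubleton_eq_iff)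
    have q7: "set (Q k j) \<inter> set (Q i l) \<subseteq> {}" using Qint[of k j i l] d by (auto simp: doubleton_eq_iff)
    have q8: "set (Q k j) \<inter> set (Q l j) \<subseteq> {c j}" using Qint[of k j l j] d by (auto simp: doubleton_eq_iff)
    have m: "c i \<in> set (Q i j)" "c i \<in> set (Q i k)" "c i \<in> set (Q i l)" "c j \<in> set (Q i j)" "c j \<in> set (Q k j)" "c j \<in> set (Q l j)"
      using Qin[of i j] Qin[of i k] Qin[of i l] Qin[of k j] Qin[of l j] d by auto
    have i12: "set P1 \<inter> set P2 = {c i, c j}" using p1 p2 q1 q2 m by auto
    have i13: "set P1 \<inter> set P3 = {c i, c j}" using p1 p3 q3 q4 m by auto
    have i23: "set P2 \<inter> set P3 = {c i, c j}" using p2 p3 q5 q6 q7 q8 m by auto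
    have sW: "set P1 \<subseteq> W" "set P2 \<subseteq> W" "set P3 \<subseteq> W"
      using p1 p2 p3 QW[OF d(1) d(2) d(5)] QW[OF d(1) d(3) d(6)] QW[OF d(1) d(4) d(7)]
        QW[OF d(3) d(2) d(8)[THEN not_sym]] QW[OF d(4) d(2) d(9)[THEN not_sym]] by auto
    have ev: "even (length P1 - 1)" "even (length P2 - 1)" "even (length P3 - 1)"
      using parity_even[OF p1(1) colE] parity_even[OF p2(1) colE] parity_even[OF p3(1) colE] p1 p2 p3 cc by auto
    show ?thesis unfolding has_even_theta_def
      apply (rule exI[of _ "c i"], rule exI[of _ "c j"], rule exI[of _ P1], rule exI[of _ P2], rule exI[of _ P3])
      using cd[OF d(1) d(2) d(5)] p1 p2 p3 i12 i13 i23 sW ev by simp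
  qed
  have "col (c 0) = col (c 1) \<or> col (c 0) = col (c 2) \<or> col (c 1) = col (c 2)" by blast
  thus ?thesis
  proof (elim disjE)
    assume "col (c 0) = col (c 1)" thus ?thesis using theta[of 0 1 2 3] by simp
  next
    assume "col (c 0) = col (c 2)" thus ?thesis using theta[of 0 2 1 3] by simp
  next
    assume "col (c 1) = col (c 2)" thus ?thesis using theta[of 1 2 0 3] by simp
  qed
qed



definition Lof :: "('a \<Rightarrow> 'b set) \<Rightarrow> 'a set \<Rightarrow> 'b list \<Rightarrow> 'a list" where
  "Lof f V ps = map (\<lambda>k. inv_into V f {ps!k, ps!Suc k}) [0..<length ps - 1]"

lemma Lof_len: "length (Lof f V ps) = length ps - 1"
  by (simp add: Lof_def)

lemma Lof_nth: "k < length ps - 1 \<Longrightarrow> Lof f V ps ! k = inv_into V f {ps!k, ps!Suc k}"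
  by (simp add: Lof_def)

lemma share_iff:
  assumes "distinct ps" "k < length ps - 1" "m < length ps - 1"
  shows "({ps!k, ps!Suc k} \<inter> {ps!m, ps!Suc m} \<noteq> {}) \<longleftrightarrow> (k = m \<or> k = Suc m \<or> m = Suc k)"
proof -
  have a: "ps!k = ps!m \<longleftrightarrow> k = m" "ps!k = ps!Suc m \<longleftrightarrow> k = Suc m"
    "ps!Suc k = ps!m \<longleftrightarrow> Suc k = m" "ps!Suc k = ps!Suc m \<longleftrightarrow> k = m"
    using assms by (auto simp: nth_eq_iff_index_eq)
  show ?thesis using a by auto
qed

lemma edge_eq_iff:
  assumes "distinct ps" "k < length ps - 1" "m < length ps - 1"
  shows "({ps!k, ps!Suc k} = {ps!m, ps!Suc m}) \<longleftrightarrow> k = m"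
proof -
  have a: "ps!k = ps!m \<longleftrightarrow> k = m" "ps!k = ps!Suc m \<longleftrightarrow> k = Suc m"
    "ps!Suc k = ps!m \<longleftrightarrow> Suc k = m" "ps!Suc k = ps!Suc m \<longleftrightarrow> k = m"
    using assms by (auto simp: nth_eq_iff_index_eq)
  show ?thesis using a by (auto simp: doubleton_eq_iff)
qed

lemma path_L:
  assumes bij: "bij_betw f V (edges E)"
    and adjf: "\<forall>x\<in>V. \<forall>y\<in>V. adj x y \<longleftrightarrow> x \<noteq> y \<and> f x \<inter> f y \<noteq> {}"
    and ps: "gpath E ps" and len: "length ps \<ge> 3"
  defines "L \<equiv> Lof f V ps"
  shows "length L = length ps - 1"
    and "set L \<subseteq> V"
    and "\<forall>k < length ps - 1. f (L!k) = {ps!k, ps!Suc k}"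
    and "induced_path adj L"
    and "\<forall>u v. consec L u v \<longleftrightarrow> u \<in> set L \<and> v \<in> set L \<and> u \<noteq> v \<and> f u \<inter> f v \<noteq> {}"
    and "\<forall>u\<in>set L. hd ps \<in> f u \<longleftrightarrow> u = hd L"
    and "\<forall>u\<in>set L. last ps \<in> f u \<longleftrightarrow> u = last L"
    and "\<forall>u\<in>set L. f u \<subseteq> set ps \<and> (\<exists>a b. a \<noteq> b \<and> f u = {a,b})"
    and "hd L \<noteq> last L"
proof -
  have dps: "distinct ps" and wps: "\<forall>i. Suc i < length ps \<longrightarrow> E (ps ! i) (ps ! Suc i)"
    using ps unfolding gpath_def by auto
  define n where "n = length ps"
  have lenL: "length L = n - 1" unfolding L_def n_def by (rule Lof_len)
  show "length L = length ps - 1" using lenL n_def by simp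
  have fL: "L!k \<in> V \<and> f (L!k) = {ps!k, ps!Suc k}" if "k < n - 1" for k
  proof -
    have "E (ps!k) (ps!Suc k)" using wps that unfolding n_def by auto
    hence "{ps!k, ps!Suc k} \<in> edges E" unfolding edges_def by blast
    hence e: "{ps!k, ps!Suc k} \<in> f ` V" using bij by (simp add: bij_betw_def)
    have "L!k = inv_into V f {ps!k, ps!Suc k}" using that unfolding L_def n_def by (rule Lof_nth)
    thus ?thesis using e by (simp add: inv_into_into f_inv_into_f)
  qed
  show fL': "\<forall>k < length ps - 1. f (L!k) = {ps!k, ps!Suc k}" using fL n_def by simp
  have inL: "\<exists>k < n - 1. u = L!k" if "u \<in> set L" for u using that lenL by (auto simp: in_set_conv_nth)
  show sV: "set L \<subseteq> V" using fL inL by blast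
  have dL: "distinct L"
  proof (subst distinct_conv_nth, intro allI impI)
    fix i j assume "i < length L" "j < length L" "i \<noteq> j"
    thus "L!i \<noteq> L!j" using fL[of i] fL[of j] edge_eq_iff[OF dps, of i j] lenL n_def by auto
  qed
  have Lne: "L \<noteq> []" using lenL len n_def by auto
  have sh: "(f (L!k) \<inter> f (L!m) \<noteq> {}) \<longleftrightarrow> (k = m \<or> k = Suc m \<or> m = Suc k)" if "k < n-1" "m < n-1" for k m
    using fL[OF that(1)] fL[OF that(2)] share_iff[OF dps, of k m] that n_def by simp
  have Lneq: "L!k \<noteq> L!m" if "k < n-1" "m < n-1" "k \<noteq> m" for k m
    using dL that lenL by (simp add: nth_eq_iff_index_eq)
  have adjL: "adj (L!k) (L!m) \<longleftrightarrow> k = Suc m \<or> m = Suc k" if "k < n-1" "m < n-1" for k m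
  proof -
    have "adj (L!k) (L!m) \<longleftrightarrow> L!k \<noteq> L!m \<and> f (L!k) \<inter> f (L!m) \<noteq> {}" using adjf fL that by blast
    thus ?thesis using sh[OF that] Lneq[OF that] by auto
  qed
  show "induced_path adj L" unfolding induced_path_def gpath_def
  proof (intro conjI allI impI)
    show "L \<noteq> []" by fact
    show "distinct L" by fact
    fix i assume "Suc i < length L" thus "adj (L!i) (L!Suc i)" using adjL[of i "Suc i"] lenL by simp
  next
    fix i j assume "j < length L" "Suc i < j"
    thus "\<not> adj (L!i) (L!j)" "\<not> adj (L!j) (L!i)" using adjL[of i j] adjL[of j i] lenL by auto
  qed
  show "\<forall>u v. consec L u v \<longleftrightarrow> u \<in> set L \<and> v \<in> set L \<and> u \<noteq> v \<and> f u \<inter> f v \<noteq> {}"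
  proof (intro allI iffI)
    fix u v assume "consec L u v"
    then obtain k where k: "Suc k < length L" "{u,v} = {L!k, L!Suc k}" unfolding consec_def by blast
    have kn: "k < n-1" "Suc k < n-1" using k lenL by auto
    have ne: "L!k \<noteq> L!Suc k" using Lneq[OF kn] by simp
    have s: "f (L!k) \<inter> f (L!Suc k) \<noteq> {}" using sh[OF kn] by simp
    have "(u = L!k \<and> v = L!Suc k) \<or> (u = L!Suc k \<and> v = L!k)" using k(2) ne by (auto simp: doubleton_eq_iff)
    moreover have "L!k \<in> set L" "L!Suc k \<in> set L" using k(1) by auto
    ultimately show "u \<in> set L \<and> v \<in> set L \<and> u \<noteq> v \<and> f u \<inter> f v \<noteq> {}" using ne s by auto
  next
    fix u v assume h: "u \<in> set L \<and> v \<in> set L \<and> u \<noteq> v \<and> f u \<inter> f v \<noteq> {}"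
    then obtain k m where km: "k < n-1" "m < n-1" "u = L!k" "v = L!m" using inL by metis
    have "k = Suc m \<or> m = Suc k" using sh[OF km(1,2)] h km by auto
    thus "consec L u v"
    proof
      assume "k = Suc m" thus ?thesis using km lenL unfolding consec_def by (intro exI[of _ m]) (auto simp: insert_commute)
    next
      assume "m = Suc k" thus ?thesis using km lenL unfolding consec_def by (intro exI[of _ k]) auto
    qed
  qed
  have hdL: "hd L = L!0" using Lne by (simp add: hd_conv_nth)
  have lastL: "last L = L!(n-2)" using Lne lenL by (simp add: last_conv_nth numeral_2_eq_2)
  have hdps: "hd ps = ps!0" "last ps = ps!(n-1)" using ps n_def unfolding gpath_def by (auto simp: hd_conv_nth last_conv_nth)
  show "\<forall>u\<in>set L. hd ps \<in> f u \<longleftrightarrow> u = hd L"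
  proof
    fix u assume "u \<in> set L"
    then obtain k where k: "k < n-1" "u = L!k" using inL by blast
    have i0: "0 < length ps" "k < length ps" "Suc k < length ps" using k len n_def by auto
    have "ps!0 = ps!k \<longleftrightarrow> 0 = k" by (rule nth_eq_iff_index_eq[OF dps i0(1) i0(2)])
    moreover have "ps!0 = ps!Suc k \<longleftrightarrow> 0 = Suc k" by (rule nth_eq_iff_index_eq[OF dps i0(1) i0(3)])
    ultimately have "ps!0 = ps!k \<longleftrightarrow> k = 0" "ps!0 \<noteq> ps!Suc k" by auto
    moreover have "L!k = L!0 \<longleftrightarrow> k = 0" using Lneq[OF k(1), of 0] k len n_def by auto
    ultimately show "hd ps \<in> f u \<longleftrightarrow> u = hd L" using fL[OF k(1)] k hdL hdps by auto
  qed
  show "\<forall>u\<in>set L. last ps \<in> f u \<longleftrightarrow> u = last L"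
  proof
    fix u assume "u \<in> set L"
    then obtain k where k: "k < n-1" "u = L!k" using inL by blast
    have i0: "n-1 < length ps" "k < length ps" "Suc k < length ps" using k len n_def by auto
    have "ps!(n-1) = ps!k \<longleftrightarrow> n-1 = k" by (rule nth_eq_iff_index_eq[OF dps i0(1) i0(2)])
    moreover have "ps!(n-1) = ps!Suc k \<longleftrightarrow> n-1 = Suc k" by (rule nth_eq_iff_index_eq[OF dps i0(1) i0(3)])
    ultimately have A: "ps!(n-1) = ps!k \<longleftrightarrow> False" "ps!(n-1) = ps!Suc k \<longleftrightarrow> k = n-2" using k by auto
    have "n-2 < n-1" using len n_def by arith
    hence B: "L!k = L!(n-2) \<longleftrightarrow> k = n-2" using Lneq[OF k(1) \<open>n-2 < n-1\<close>] by auto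
    note A B
    show "last ps \<in> f u \<longleftrightarrow> u = last L" using A B fL[OF k(1)] k lastL hdps by auto
  qed
  show "\<forall>u\<in>set L. f u \<subseteq> set ps \<and> (\<exists>a b. a \<noteq> b \<and> f u = {a,b})"
  proof
    fix u assume "u \<in> set L"
    then obtain k where k: "k < n-1" "u = L!k" using inL by blast
    have i0: "k < length ps" "Suc k < length ps" using k n_def by auto
    have "ps!k \<noteq> ps!Suc k" using nth_eq_iff_index_eq[OF dps i0] by simp
    thus "f u \<subseteq> set ps \<and> (\<exists>a b. a \<noteq> b \<and> f u = {a,b})" using fL[OF k(1)] k n_def by auto
  qed
  have "0 < n-1" "n-2 < n-1" "(0::nat) \<noteq> n-2" using len n_def by arith+
  thus "hd L \<noteq> last L" using hdL lastL Lneq[of 0 "n-2"] by auto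
qed


lemma len3:
  assumes "gpath E ps" "hd ps \<noteq> last ps" "even (length ps - 1)"
  shows "length ps \<ge> 3"
proof -
  have ne: "ps \<noteq> []" using assms(1) by (simp add: gpath_def)
  have "length ps \<noteq> 1"
  proof
    assume "length ps = 1"
    then obtain a where "ps = [a]" by (cases ps) auto
    thus False using assms(2) by simp
  qed
  moreover have "length ps \<noteq> 2" using assms(3) by (auto)
  moreover have "length ps > 0" using ne by simp
  ultimately show ?thesis by arith
qed

lemma theta_prism:
  fixes V :: "'a set" and adj :: "'a \<Rightarrow> 'a \<Rightarrow> bool" and W :: "'b set" and E :: "'b \<Rightarrow> 'b \<Rightarrow> bool"
  assumes lg: "is_line_graph_of V adj W E" and th: "has_even_theta W E"
  shows "\<exists>X. odd_prism_in V adj X"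
proof -
  obtain f where bij: "bij_betw f V (edges E)" and adjf: "\<forall>x\<in>V. \<forall>y\<in>V. adj x y \<longleftrightarrow> x \<noteq> y \<and> f x \<inter> f y \<noteq> {}"
    using lg unfolding is_line_graph_of_def by blast
  obtain x y P1 P2 P3 where T: "x \<noteq> y" "gpath E P1" "gpath E P2" "gpath E P3"
     "hd P1 = x" "last P1 = y" "hd P2 = x" "last P2 = y" "hd P3 = x" "last P3 = y"
     "set P1 \<inter> set P2 = {x, y}" "set P1 \<inter> set P3 = {x, y}" "set P2 \<inter> set P3 = {x, y}"
     "even (length P1 - 1)" "even (length P2 - 1)" "even (length P3 - 1)"
    using th unfolding has_even_theta_def by blast
  have l1: "length P1 \<ge> 3" using len3[of E P1] T by simp
  have l2: "length P2 \<ge> 3" using len3[of E P2] T by simp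
  have l3: "length P3 \<ge> 3" using len3[of E P3] T by simp
  define L1 where "L1 = Lof f V P1"
  define L2 where "L2 = Lof f V P2"
  define L3 where "L3 = Lof f V P3"
  note A1 = path_L[OF bij adjf T(2) l1, folded L1_def, unfolded T(5,6)]
  note A2 = path_L[OF bij adjf T(3) l2, folded L2_def, unfolded T(7,8)]
  note A3 = path_L[OF bij adjf T(4) l3, folded L3_def, unfolded T(9,10)]
  define X where "X = set L1 \<union> set L2 \<union> set L3"
  have XV: "X \<subseteq> V" using A1(2) A2(2) A3(2) unfolding X_def by blast
  have disj: "set La \<inter> set Lb = {}"
    if h: "\<forall>u\<in>set La. f u \<subseteq> set Pa \<and> (\<exists>a b. a \<noteq> b \<and> f u = {a,b})" "\<forall>u\<in>set Lb. f u \<subseteq> set Pb \<and> (\<exists>a b. a \<noteq> b \<and> f u = {a,b})"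
      "set Pa \<inter> set Pb = {x,y}" "\<forall>u\<in>set La. x \<in> f u \<longleftrightarrow> u = hd La" "\<forall>u\<in>set La. y \<in> f u \<longleftrightarrow> u = last La" "hd La \<noteq> last La"
    for La Lb :: "'a list" and Pa Pb :: "'b list"
  proof (rule ccontr)
    assume "set La \<inter> set Lb \<noteq> {}"
    then obtain u where u: "u \<in> set La" "u \<in> set Lb" by blast
    then obtain a b where ab: "a \<noteq> b" "f u = {a,b}" using h(1) by blast
    have "f u \<subseteq> {x,y}" using h(1,2,3) u by blast
    hence "x \<in> f u" "y \<in> f u" using ab by auto
    thus False using h(4,5,6) u by auto
  qed
  have d12: "set L1 \<inter> set L2 = {}" by (rule disj[OF A1(8) A2(8) T(11) A1(6) A1(7) A1(9)])
  have d13: "set L1 \<inter> set L3 = {}" by (rule disj[OF A1(8) A3(8) T(12) A1(6) A1(7) A1(9)])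
  have d23: "set L2 \<inter> set L3 = {}" by (rule disj[OF A2(8) A3(8) T(13) A2(6) A2(7) A2(9)])
  have odd1: "odd (length L1 - 1)" using A1(1) l1 T(14) by presburger
  have odd2: "odd (length L2 - 1)" using A2(1) l2 T(15) by presburger
  have odd3: "odd (length L3 - 1)" using A3(1) l3 T(16) by presburger
  have ne: "L1 \<noteq> []" "L2 \<noteq> []" "L3 \<noteq> []" using A1(1) A2(1) A3(1) l1 l2 l3 by auto
  have hdc: "u \<in> {hd L1, hd L2, hd L3} \<longleftrightarrow> x \<in> f u" if uX: "u \<in> X" for u
  proof
    have m: "hd L1 \<in> set L1" "hd L2 \<in> set L2" "hd L3 \<in> set L3" using ne by simp_all
    assume "u \<in> {hd L1, hd L2, hd L3}"
    then consider "u = hd L1" | "u = hd L2" | "u = hd L3" by blast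
    thus "x \<in> f u"
    proof cases
      case 1 thus ?thesis using A1(6) m(1) by blast
    next
      case 2 thus ?thesis using A2(6) m(2) by blast
    next
      case 3 thus ?thesis using A3(6) m(3) by blast
    qed
  next
    assume h: "x \<in> f u"
    consider "u \<in> set L1" | "u \<in> set L2" | "u \<in> set L3" using uX unfolding X_def by blast
    thus "u \<in> {hd L1, hd L2, hd L3}"
    proof cases
      case 1 thus ?thesis using A1(6) h by blast
    next
      case 2 thus ?thesis using A2(6) h by blast
    next
      case 3 thus ?thesis using A3(6) h by blast
    qed
  qed
  have lac: "u \<in> {last L1, last L2, last L3} \<longleftrightarrow> y \<in> f u" if uX: "u \<in> X" for u
  proof
    have m: "last L1 \<in> set L1" "last L2 \<in> set L2" "last L3 \<in> set L3" using ne by simp_all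
    assume "u \<in> {last L1, last L2, last L3}"
    then consider "u = last L1" | "u = last L2" | "u = last L3" by blast
    thus "y \<in> f u"
    proof cases
      case 1 thus ?thesis using A1(7) m(1) by blast
    next
      case 2 thus ?thesis using A2(7) m(2) by blast
    next
      case 3 thus ?thesis using A3(7) m(3) by blast
    qed
  next
    assume h: "y \<in> f u"
    consider "u \<in> set L1" | "u \<in> set L2" | "u \<in> set L3" using uX unfolding X_def by blast
    thus "u \<in> {last L1, last L2, last L3}"
    proof cases
      case 1 thus ?thesis using A1(7) h by blast
    next
      case 2 thus ?thesis using A2(7) h by blast
    next
      case 3 thus ?thesis using A3(7) h by blast
    qed
  qed
  have cross: "(x \<in> f u \<and> x \<in> f v) \<or> (y \<in> f u \<and> y \<in> f v)"
    if cu: "f u \<subseteq> set Pa" "f v \<subseteq> set Pb" "set Pa \<inter> set Pb = {x,y}" "f u \<inter> f v \<noteq> {}" for u v and Pa Pb :: "'b list"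
  proof -
    obtain w where w: "w \<in> f u" "w \<in> f v" using cu(4) by blast
    hence "w \<in> set Pa \<inter> set Pb" using cu(1,2) by blast
    hence "w = x \<or> w = y" using cu(3) by simp
    thus ?thesis using w by blast
  qed
  have iff: "adj u v \<longleftrightarrow> consec L1 u v \<or> consec L2 u v \<or> consec L3 u v \<or>
        (u \<noteq> v \<and> u \<in> {hd L1, hd L2, hd L3} \<and> v \<in> {hd L1, hd L2, hd L3}) \<or>
        (u \<noteq> v \<and> u \<in> {last L1, last L2, last L3} \<and> v \<in> {last L1, last L2, last L3})"
    if uv: "u \<in> X" "v \<in> X" for u v
  proof -
    have a: "adj u v \<longleftrightarrow> u \<noteq> v \<and> f u \<inter> f v \<noteq> {}" using adjf XV uv by blast
    have s1: "\<forall>w\<in>set L1. f w \<subseteq> set P1" and s2: "\<forall>w\<in>set L2. f w \<subseteq> set P2" and s3: "\<forall>w\<in>set L3. f w \<subseteq> set P3"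
      using A1(8) A2(8) A3(8) by blast+
    show ?thesis
    proof
      assume "adj u v"
      hence uv2: "u \<noteq> v" "f u \<inter> f v \<noteq> {}" using a by auto
      show "consec L1 u v \<or> consec L2 u v \<or> consec L3 u v \<or>
        (u \<noteq> v \<and> u \<in> {hd L1, hd L2, hd L3} \<and> v \<in> {hd L1, hd L2, hd L3}) \<or>
        (u \<noteq> v \<and> u \<in> {last L1, last L2, last L3} \<and> v \<in> {last L1, last L2, last L3})"
      proof (cases "(u \<in> set L1 \<and> v \<in> set L1) \<or> (u \<in> set L2 \<and> v \<in> set L2) \<or> (u \<in> set L3 \<and> v \<in> set L3)")
        case True
        thus ?thesis using A1(5) A2(5) A3(5) uv2 by blast
      next
        case False
        have "(x \<in> f u \<and> x \<in> f v) \<or> (y \<in> f u \<and> y \<in> f v)"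
        proof -
          have "u \<in> set L1 \<or> u \<in> set L2 \<or> u \<in> set L3" "v \<in> set L1 \<or> v \<in> set L2 \<or> v \<in> set L3"
            using uv unfolding X_def by auto
          thus ?thesis using False uv2(2) s1 s2 s3 T(11,12,13)
            cross[of u P1 v P2] cross[of u P2 v P1] cross[of u P1 v P3] cross[of u P3 v P1]
            cross[of u P2 v P3] cross[of u P3 v P2]
            by (auto simp: Int_commute)
        qed
        thus ?thesis using hdc[OF uv(1)] hdc[OF uv(2)] lac[OF uv(1)] lac[OF uv(2)] uv2(1) by blast
      qed
    next
      assume "consec L1 u v \<or> consec L2 u v \<or> consec L3 u v \<or>
        (u \<noteq> v \<and> u \<in> {hd L1, hd L2, hd L3} \<and> v \<in> {hd L1, hd L2, hd L3}) \<or>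
        (u \<noteq> v \<and> u \<in> {last L1, last L2, last L3} \<and> v \<in> {last L1, last L2, last L3})"
      hence "u \<noteq> v \<and> f u \<inter> f v \<noteq> {}"
      proof (elim disjE)
        assume "consec L1 u v" thus ?thesis using A1(5) by blast
      next
        assume "consec L2 u v" thus ?thesis using A2(5) by blast
      next
        assume "consec L3 u v" thus ?thesis using A3(5) by blast
      next
        assume h: "u \<noteq> v \<and> u \<in> {hd L1, hd L2, hd L3} \<and> v \<in> {hd L1, hd L2, hd L3}"
        hence "x \<in> f u" "x \<in> f v" using hdc[OF uv(1)] hdc[OF uv(2)] by simp_all
        thus ?thesis using h by blast
      next
        assume h: "u \<noteq> v \<and> u \<in> {last L1, last L2, last L3} \<and> v \<in> {last L1, last L2, last L3}"
        hence "y \<in> f u" "y \<in> f v" using lac[OF uv(1)] lac[OF uv(2)] by simp_all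
        thus ?thesis using h by blast
      qed
      thus "adj u v" using a by simp
    qed
  qed
  show ?thesis unfolding odd_prism_in_def
    apply (rule exI[of _ X], rule conjI[OF XV], rule exI[of _ L1], rule exI[of _ L2], rule exI[of _ L3])
    apply (intro conjI ballI)
    subgoal by (simp add: X_def)
    subgoal by (fact A1(4))
    subgoal by (fact A2(4))
    subgoal by (fact A3(4))
    subgoal by (fact d12)
    subgoal by (fact d13)
    subgoal by (fact d23)
    subgoal by (fact A1(9))
    subgoal by (fact A2(9))
    subgoal by (fact A3(9))
    subgoal by (fact odd1)
    subgoal by (fact odd2)
    subgoal by (fact odd3)
    subgoal by (rule iff)
    done
qed


theorem proposition4p4:
  fixes V :: "'a set" and \<theta> :: "'a \<Rightarrow> 'a \<Rightarrow> int"
    and W :: "'b set" and E :: "'b \<Rightarrow> 'b \<Rightarrow> bool"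
  assumes "line_trigraph V \<theta>"
    and "\<not> (\<exists>X. odd_prism_in V (tadj \<theta>) X)"
    and "graph W E" and "bipartite W E"
    and "is_line_graph_of V (tadj \<theta>) W E"
  shows "\<not> has_even_theta W E \<and> series_parallel W E"
proof -
  have nt: "\<not> has_even_theta W E"
  proof
    assume "has_even_theta W E"
    hence "\<exists>X. odd_prism_in V (tadj \<theta>) X" using theta_prism[OF assms(5)] by blast
    thus False using assms(2) by blast
  qed
  moreover have "series_parallel W E" unfolding series_parallel_def
    using K4_even_theta[OF assms(3) assms(4)] nt by blast
  ultimately show ?thesis by blast
qed

end
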